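(* Let $\varepsilon>0$, $\alpha\in(0,1)$, $y_0\in L^2(\Omega,\mathcal F_0,\mathbb P;L^2(D))$, and let $(\beta^\ast,\eta^\ast)\in\mathcal B\times\mathcal U_M$ be a Nash equilibrium as in the game $\mathcal J_\varepsilon(\eta^\ast;\beta^\ast)=\sup_{\beta\in\mathcal B}\mathcal J_\varepsilon(\eta^\ast;\beta)=\inf_{\eta\in\mathcal U_M}\mathcal J_\varepsilon(\eta;\beta^\ast)$. Define $H(x)=\int_0^T\mathbb E|z(t,x;\eta^\ast)|^2\,dt$ for a.e. $x\in D$, and $c(\alpha)=\sup\{c\ge0:\ |\{H\ge c\}|\ge\alpha|D|\}$. Then $|\{H\ge c(\alpha)\}|\ge\alpha|D|\ge|\{H>c(\alpha)\}|$, and $\theta^\ast:=(\beta^\ast)^2$ satisfies $\theta^\ast=1$ a.e. on $\{H>c(\alpha)\}$ and $\theta^\ast=0$ a.e. on $\{H<c(\alpha)\}$.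
   Context: $(\Omega,\mathcal F,\{\mathcal F_t\}_{t\ge0},\mathbb P)$ is a complete filtered probability space satisfying the usual conditions, carrying a standard one-dimensional Brownian motion $w$, and $\{\mathcal F_t\}$ is the (augmented) filtration generated by $w$. $T>0$ is fixed. $D\subset\mathbb R^d$ is a bounded domain with $C^2$ boundary; $(\cdot,\cdot)$, $\|\cdot\|$ denote the inner product and norm of $L^2(D)$; $|\cdot|$ is Lebesgue measure. $A$ is the Dirichlet Laplacian: $\mathcal D(A)=H^2(D)\cap H^1_0(D)$, $Av=\Delta v$. $a\in L^\infty_{\mathcal F}(0,T;\mathbb R)$ is a bounded real-valued adapted process. $\mathcal B=\{\beta\in L^\infty(D;[0,1]):\ \|\beta\|^2=\alpha|D|\}$; $M>0$ and $\mathcal U_M=\{\eta\in L^2(\Omega,\mathcal F_T,\mathbb P;L^2(D)):\ \mathbb E\|\eta\|^2\le M\}$. For $\eta\in L^2(\Omega,\mathcal F_T,\mathbb P;L^2(D))$, $(z(\cdot;\eta),Z(\cdot;\eta))$ denotes the unique solution in $\big(L^2_{\mathcal F}(\Omega;C([0,T];L^2(D)))\cap L^2_{\mathcal F}(0,T;H^1_0(D))\big)\times L^2_{\mathcal F}(0,T;L^2(D))$ of $dz=-Az\,dt-a(t)Z\,dt+Z\,dw(t)$ on $(0,T)$, $z(T)=\eta$. $\mathcal J_\varepsilon(\eta;\beta)=\frac12\int_0^T\mathbb E\|\beta z(t;\eta)\|^2dt+\varepsilon(\mathbb E\|\eta\|^2)^{1/2}+\mathbb E(y_0,z(0;\eta))$.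 *)

theory Defs
  imports "HOL-Probability.Probability"
begin

text \<open>Random fields f : Omega -> L2(D) are represented as functions 'w => 'x => real.
  The solution map eta |-> z(.;eta) of the backward stochastic heat equation is an abstract
  parameter zsol: zsol eta t omega x = z(t, x; eta)(omega).\<close>

definition Esq :: "'w measure \<Rightarrow> 'x::euclidean_space set \<Rightarrow> ('w \<Rightarrow> 'x \<Rightarrow> real) \<Rightarrow> real" where
  "Esq P D f = (\<integral>p. (f (fst p) (snd p))^2 \<partial>(P \<Otimes>\<^sub>M lebesgue_on D))"

definition L2_space :: "'w measure \<Rightarrow> 'w measure \<Rightarrow> 'x::euclidean_space set \<Rightarrow> ('w \<Rightarrow> 'x \<Rightarrow> real) set" where
  "L2_space F P D = {f. (\<lambda>p. f (fst p) (snd p)) \<in> borel_measurable (F \<Otimes>\<^sub>M lebesgue_on D)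
       \<and> integrable (P \<Otimes>\<^sub>M lebesgue_on D) (\<lambda>p. (f (fst p) (snd p))^2)}"

definition Bset :: "'x::euclidean_space set \<Rightarrow> real \<Rightarrow> ('x \<Rightarrow> real) set" where
  "Bset D \<alpha> = {\<beta>. \<beta> \<in> borel_measurable (lebesgue_on D) \<and> (\<forall>x\<in>D. 0 \<le> \<beta> x \<and> \<beta> x \<le> 1)
       \<and> (\<integral>x. (\<beta> x)^2 \<partial>lebesgue_on D) = \<alpha> * measure lebesgue D}"

definition UM :: "'w measure \<Rightarrow> 'w measure \<Rightarrow> 'x::euclidean_space set \<Rightarrow> real \<Rightarrow> ('w \<Rightarrow> 'x \<Rightarrow> real) set" where
  "UM FT P D M = {\<eta> \<in> L2_space FT P D. Esq P D \<eta> \<le> M}"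

definition sol_regular ::
  "'w measure \<Rightarrow> 'w measure \<Rightarrow> 'x::euclidean_space set \<Rightarrow> real \<Rightarrow>
   (('w \<Rightarrow> 'x \<Rightarrow> real) \<Rightarrow> real \<Rightarrow> 'w \<Rightarrow> 'x \<Rightarrow> real) \<Rightarrow> bool" where
  "sol_regular FT P D T zsol = (\<forall>\<eta>\<in>L2_space FT P D.
      (\<lambda>q. zsol \<eta> (fst q) (fst (snd q)) (snd (snd q)))
          \<in> borel_measurable (lebesgue_on {0..T} \<Otimes>\<^sub>M (P \<Otimes>\<^sub>M lebesgue_on D))
    \<and> integrable (lebesgue_on {0..T} \<Otimes>\<^sub>M (P \<Otimes>\<^sub>M lebesgue_on D))
          (\<lambda>q. (zsol \<eta> (fst q) (fst (snd q)) (snd (snd q)))^2)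
    \<and> (\<lambda>p. zsol \<eta> 0 (fst p) (snd p)) \<in> borel_measurable (P \<Otimes>\<^sub>M lebesgue_on D)
    \<and> integrable (P \<Otimes>\<^sub>M lebesgue_on D) (\<lambda>p. (zsol \<eta> 0 (fst p) (snd p))^2))"

definition Jeps ::
  "'w measure \<Rightarrow> 'x::euclidean_space set \<Rightarrow> real \<Rightarrow>
   (('w \<Rightarrow> 'x \<Rightarrow> real) \<Rightarrow> real \<Rightarrow> 'w \<Rightarrow> 'x \<Rightarrow> real) \<Rightarrow> real \<Rightarrow> ('w \<Rightarrow> 'x \<Rightarrow> real) \<Rightarrow>
   ('w \<Rightarrow> 'x \<Rightarrow> real) \<Rightarrow> ('x \<Rightarrow> real) \<Rightarrow> real" where
  "Jeps P D T zsol \<epsilon> y0 \<eta> \<beta> =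
     1/2 * (\<integral>t. Esq P D (\<lambda>\<omega> x. \<beta> x * zsol \<eta> t \<omega> x) \<partial>lebesgue_on {0..T})
     + \<epsilon> * sqrt (Esq P D \<eta>)
     + (\<integral>p. y0 (fst p) (snd p) * zsol \<eta> 0 (fst p) (snd p) \<partial>(P \<Otimes>\<^sub>M lebesgue_on D))"

definition Hfun ::
  "'w measure \<Rightarrow> real \<Rightarrow> (('w \<Rightarrow> 'x \<Rightarrow> real) \<Rightarrow> real \<Rightarrow> 'w \<Rightarrow> 'x \<Rightarrow> real) \<Rightarrow>
   ('w \<Rightarrow> 'x \<Rightarrow> real) \<Rightarrow> 'x \<Rightarrow> real" where
  "Hfun P T zsol \<eta> x = (\<integral>t. (\<integral>\<omega>. (zsol \<eta> t \<omega> x)^2 \<partial>P) \<partial>lebesgue_on {0..T})"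

definition c_alpha :: "'x::euclidean_space set \<Rightarrow> ('x \<Rightarrow> real) \<Rightarrow> real \<Rightarrow> real" where
  "c_alpha D H \<alpha> = Sup {c. 0 \<le> c \<and> \<alpha> * measure lebesgue D \<le> measure lebesgue {x\<in>D. c \<le> H x}}"

end

theory Submission
  imports Defs
begin


lemma sf_lebesgue_on: "S \<in> sets lebesgue \<Longrightarrow> bounded S \<Longrightarrow> sigma_finite_measure (lebesgue_on (S::'a::euclidean_space set))"
  using finite_measure_lebesgue_on bounded_set_imp_lmeasurable finite_measure.axioms(1) by blast

lemma meas_rearr1:
  fixes Z :: "'a \<times> 'b \<times> 'c \<Rightarrow> real"
  assumes "Z \<in> borel_measurable (A \<Otimes>\<^sub>M (B \<Otimes>\<^sub>M C))"
  shows "(\<lambda>p. Z (fst (fst p), snd p, snd (fst p))) \<in> borel_measurable ((A \<Otimes>\<^sub>M C) \<Otimes>\<^sub>M B)"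
  by (rule measurable_compose[OF _ assms]) measurable

lemma meas_rearr2:
  fixes Z :: "'a \<times> 'b \<times> 'c \<Rightarrow> real"
  assumes "Z \<in> borel_measurable (A \<Otimes>\<^sub>M (B \<Otimes>\<^sub>M C))"
  shows "(\<lambda>p. Z (snd (fst p), snd p, fst (fst p))) \<in> borel_measurable ((C \<Otimes>\<^sub>M A) \<Otimes>\<^sub>M B)"
  by (rule measurable_compose[OF _ assms]) measurable

lemma meas_sec:
  fixes Z :: "'a \<times> 'b \<times> 'c \<Rightarrow> real"
  assumes "Z \<in> borel_measurable (A \<Otimes>\<^sub>M (B \<Otimes>\<^sub>M C))" "t \<in> space A"
  shows "(\<lambda>p. Z (t, p)) \<in> borel_measurable (B \<Otimes>\<^sub>M C)"
  using assms by measurable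

lemma Hprops:
  fixes P :: "'w measure" and D :: "'x::euclidean_space set" and z :: "real \<Rightarrow> 'w \<Rightarrow> 'x \<Rightarrow> real"
    and T :: real
  assumes P: "prob_space P" and Dm: "D \<in> sets lebesgue" "bounded D"
  and Zm: "(\<lambda>q. z (fst q) (fst (snd q)) (snd (snd q))) \<in> borel_measurable (lebesgue_on {0..T} \<Otimes>\<^sub>M (P \<Otimes>\<^sub>M lebesgue_on D))"
  and Zi: "integrable (lebesgue_on {0..T} \<Otimes>\<^sub>M (P \<Otimes>\<^sub>M lebesgue_on D)) (\<lambda>q. (z (fst q) (fst (snd q)) (snd (snd q)))^2)"
  defines "H \<equiv> (\<lambda>x. (\<integral>t. (\<integral>\<omega>. (z t \<omega> x)^2 \<partial>P) \<partial>lebesgue_on {0..T}))"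
  shows "H \<in> borel_measurable (lebesgue_on D)" "\<forall>x. 0 \<le> H x" "integrable (lebesgue_on D) H"
    "\<And>\<beta>. \<beta> \<in> borel_measurable (lebesgue_on D) \<Longrightarrow> \<forall>x\<in>D. \<bar>\<beta> x\<bar> \<le> 1 \<Longrightarrow>
      (\<integral>t. Esq P D (\<lambda>\<omega> x. \<beta> x * z t \<omega> x) \<partial>lebesgue_on {0..T}) = (\<integral>x. (\<beta> x)^2 * H x \<partial>lebesgue_on D)"
proof -
  define \<mu> where "\<mu> = lebesgue_on {0..T}"
  define \<nu> where "\<nu> = lebesgue_on D"
  define Z where "Z = (\<lambda>q. z (fst q) (fst (snd q)) (snd (snd q)))"
  interpret Pp: prob_space P by fact
  interpret mu: sigma_finite_measure \<mu> unfolding \<mu>_def by (rule sf_lebesgue_on) auto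
  interpret nu: sigma_finite_measure \<nu> unfolding \<nu>_def by (rule sf_lebesgue_on) (use Dm in auto)
  interpret Pnu: pair_sigma_finite P \<nu> ..
  interpret munu: pair_sigma_finite \<mu> \<nu> ..
  have PNsf: "sigma_finite_measure (P \<Otimes>\<^sub>M \<nu>)" by (rule sigma_finite_pair_measure) unfold_locales
  have Zm': "Z \<in> borel_measurable (\<mu> \<Otimes>\<^sub>M (P \<Otimes>\<^sub>M \<nu>))" using Zm unfolding Z_def \<mu>_def \<nu>_def .
  have Zi': "integrable (\<mu> \<Otimes>\<^sub>M (P \<Otimes>\<^sub>M \<nu>)) (\<lambda>q. (Z q)^2)" using Zi unfolding Z_def \<mu>_def \<nu>_def .
  define G where "G t x = (\<integral>\<^sup>+\<omega>. ennreal ((z t \<omega> x)^2) \<partial>P)" for t x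
  define Hn where "Hn x = (\<integral>\<^sup>+t. G t x \<partial>\<mu>)" for x
  have m1: "(\<lambda>p. (z (fst (fst p)) (snd p) (snd (fst p)))^2) \<in> borel_measurable ((\<mu> \<Otimes>\<^sub>M \<nu>) \<Otimes>\<^sub>M P)"
    using meas_rearr1[OF Zm'] unfolding Z_def by simp
  have m2: "(\<lambda>p. (z (snd (fst p)) (snd p) (fst (fst p)))^2) \<in> borel_measurable ((\<nu> \<Otimes>\<^sub>M \<mu>) \<Otimes>\<^sub>M P)"
    using meas_rearr2[OF Zm'] unfolding Z_def by simp
  have Gm: "(\<lambda>p. G (fst p) (snd p)) \<in> borel_measurable (\<mu> \<Otimes>\<^sub>M \<nu>)"
    unfolding G_def by (rule Pp.borel_measurable_nn_integral) (use m1 in \<open>simp add: case_prod_beta\<close>)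
  have Gm2: "(\<lambda>p. G (snd p) (fst p)) \<in> borel_measurable (\<nu> \<Otimes>\<^sub>M \<mu>)"
    unfolding G_def by (rule Pp.borel_measurable_nn_integral) (use m2 in \<open>simp add: case_prod_beta\<close>)
  have Hnm: "Hn \<in> borel_measurable \<nu>"
    unfolding Hn_def by (rule mu.borel_measurable_nn_integral) (use Gm2 in \<open>simp add: case_prod_beta\<close>)
  have Hm: "H \<in> borel_measurable \<nu>"
  proof -
    have "(\<lambda>p. (\<integral>\<omega>. (z (snd p) \<omega> (fst p))^2 \<partial>P)) \<in> borel_measurable (\<nu> \<Otimes>\<^sub>M \<mu>)"
      by (rule Pp.borel_measurable_lebesgue_integral[where f="\<lambda>p \<omega>. (z (snd p) \<omega> (fst p))^2"])
         (use m2 in \<open>simp add: case_prod_beta\<close>)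
    then show ?thesis unfolding H_def \<mu>_def[symmetric]
      by (intro mu.borel_measurable_lebesgue_integral) (simp add: case_prod_beta)
  qed
  show "H \<in> borel_measurable (lebesgue_on D)" using Hm unfolding \<nu>_def .
  show Hnn: "\<forall>x. 0 \<le> H x" unfolding H_def by (auto intro!: integral_nonneg_AE)
  have chain: "(\<integral>\<^sup>+q. b (snd (snd q)) * ennreal ((Z q)^2) \<partial>(\<mu> \<Otimes>\<^sub>M (P \<Otimes>\<^sub>M \<nu>)))
      = (\<integral>\<^sup>+x. b x * Hn x \<partial>\<nu>)" if bm: "b \<in> borel_measurable \<nu>" for b
  proof -
    have f1: "(\<lambda>q. b (snd (snd q)) * ennreal ((Z q)^2)) \<in> borel_measurable (\<mu> \<Otimes>\<^sub>M (P \<Otimes>\<^sub>M \<nu>))"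
      using Zm' bm by measurable
    have "(\<integral>\<^sup>+q. b (snd (snd q)) * ennreal ((Z q)^2) \<partial>(\<mu> \<Otimes>\<^sub>M (P \<Otimes>\<^sub>M \<nu>)))
       = (\<integral>\<^sup>+t. (\<integral>\<^sup>+y. b (snd y) * ennreal ((z t (fst y) (snd y))^2) \<partial>(P \<Otimes>\<^sub>M \<nu>)) \<partial>\<mu>)"
      using sigma_finite_measure.nn_integral_fst[OF PNsf f1, symmetric] unfolding Z_def by simp
    also have "\<dots> = (\<integral>\<^sup>+t. (\<integral>\<^sup>+x. b x * G t x \<partial>\<nu>) \<partial>\<mu>)"
    proof (rule nn_integral_cong)
      fix t assume t: "t \<in> space \<mu>"
      have zs[measurable]: "(\<lambda>y. z t (fst y) (snd y)) \<in> borel_measurable (P \<Otimes>\<^sub>M \<nu>)"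
        using meas_sec[OF Zm' t] by (simp add: Z_def)
      have sm: "(\<lambda>y. b (snd y) * ennreal ((z t (fst y) (snd y))^2)) \<in> borel_measurable (P \<Otimes>\<^sub>M \<nu>)"
        using bm by measurable
      have "(\<integral>\<^sup>+y. b (snd y) * ennreal ((z t (fst y) (snd y))^2) \<partial>(P \<Otimes>\<^sub>M \<nu>))
          = (\<integral>\<^sup>+x. (\<integral>\<^sup>+\<omega>. b x * ennreal ((z t \<omega> x)^2) \<partial>P) \<partial>\<nu>)"
        using Pnu.nn_integral_snd[OF sm, symmetric] by simp
      also have "\<dots> = (\<integral>\<^sup>+x. b x * G t x \<partial>\<nu>)"
      proof (rule nn_integral_cong)
        fix x assume x: "x \<in> space \<nu>"
        have "(\<lambda>\<omega>. ennreal ((z t \<omega> x)^2)) \<in> borel_measurable P"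
          using measurable_Pair1[OF zs x] by simp
        then show "(\<integral>\<^sup>+\<omega>. b x * ennreal ((z t \<omega> x)^2) \<partial>P) = b x * G t x"
          unfolding G_def by (rule nn_integral_cmult)
      qed
      finally show "(\<integral>\<^sup>+y. b (snd y) * ennreal ((z t (fst y) (snd y))^2) \<partial>(P \<Otimes>\<^sub>M \<nu>)) = (\<integral>\<^sup>+x. b x * G t x \<partial>\<nu>)" .
    qed
    also have "\<dots> = (\<integral>\<^sup>+x. (\<integral>\<^sup>+t. b x * G t x \<partial>\<mu>) \<partial>\<nu>)"
    proof -
      have "(\<lambda>p. b (snd p) * G (fst p) (snd p)) \<in> borel_measurable (\<mu> \<Otimes>\<^sub>M \<nu>)"
        using Gm bm by measurable
      from munu.Fubini[OF this] show ?thesis by simp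
    qed
    also have "\<dots> = (\<integral>\<^sup>+x. b x * Hn x \<partial>\<nu>)"
    proof (rule nn_integral_cong)
      fix x assume x: "x \<in> space \<nu>"
      have "(\<lambda>t. G t x) \<in> borel_measurable \<mu>"
        using measurable_Pair1[OF Gm x] by simp
      then show "(\<integral>\<^sup>+t. b x * G t x \<partial>\<mu>) = b x * Hn x"
        unfolding Hn_def by (rule nn_integral_cmult)
    qed
    finally show ?thesis .
  qed
  have zpt: "(\<lambda>\<omega>. z t \<omega> x) \<in> borel_measurable P" if t: "t \<in> space \<mu>" and x: "x \<in> space \<nu>" for t x
  proof -
    have zs: "(\<lambda>y. z t (fst y) (snd y)) \<in> borel_measurable (P \<Otimes>\<^sub>M \<nu>)"
      using meas_sec[OF Zm' t] by (simp add: Z_def)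
    show ?thesis using measurable_Pair1[OF zs x] by simp
  qed
  have tot: "(\<integral>\<^sup>+q. ennreal ((Z q)^2) \<partial>(\<mu> \<Otimes>\<^sub>M (P \<Otimes>\<^sub>M \<nu>))) < \<infinity>"
    using Zi' unfolding integrable_iff_bounded by simp
  have Hnfin: "(\<integral>\<^sup>+x. Hn x \<partial>\<nu>) < \<infinity>"
    using chain[of "\<lambda>x. 1"] tot by simp
  have AEfin: "AE x in \<nu>. Hn x \<noteq> \<infinity>"
    by (rule nn_integral_PInf_AE[OF Hnm]) (use Hnfin in simp)
  have Hx: "ennreal (H x) = Hn x" if x: "x \<in> space \<nu>" and fin: "Hn x \<noteq> \<infinity>" for x
  proof -
    have Gx[measurable]: "(\<lambda>t. G t x) \<in> borel_measurable \<mu>"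
      using measurable_Pair1[OF Gm x] by simp
    have ae: "AE t in \<mu>. G t x \<noteq> \<infinity>"
      by (rule nn_integral_PInf_AE[OF Gx]) (use fin in \<open>simp add: Hn_def\<close>)
    have inner: "(\<integral>\<omega>. (z t \<omega> x)^2 \<partial>P) = enn2real (G t x)" if t: "t \<in> space \<mu>" for t
        unfolding G_def by (rule integral_eq_nn_integral) (use zpt[OF t x] in auto)
    have "H x = (\<integral>t. enn2real (G t x) \<partial>\<mu>)"
      unfolding H_def \<mu>_def[symmetric] using inner by (intro Bochner_Integration.integral_cong) auto
    also have "\<dots> = enn2real (\<integral>\<^sup>+t. ennreal (enn2real (G t x)) \<partial>\<mu>)"
      by (rule integral_eq_nn_integral) auto
    also have "(\<integral>\<^sup>+t. ennreal (enn2real (G t x)) \<partial>\<mu>) = Hn x"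
      unfolding Hn_def by (rule nn_integral_cong_AE) (use ae in \<open>auto simp: less_top\<close>)
    finally show ?thesis using fin by (simp add: less_top)
  qed
  have Heq: "AE x in \<nu>. ennreal (H x) = Hn x"
  proof -
    have "AE x in \<nu>. Hn x \<noteq> \<infinity> \<longrightarrow> ennreal (H x) = Hn x" by (rule AE_I2) (use Hx in auto)
    with AEfin show ?thesis by eventually_elim auto
  qed
  have HnnInt: "(\<integral>\<^sup>+x. ennreal (H x) \<partial>\<nu>) = (\<integral>\<^sup>+x. Hn x \<partial>\<nu>)"
    by (rule nn_integral_cong_AE) (rule Heq)
  show "integrable (lebesgue_on D) H" unfolding \<nu>_def[symmetric]
    by (rule integrableI_nonneg) (use Hm Hnn HnnInt Hnfin in auto)
  have mPN: "pair_sigma_finite \<mu> (P \<Otimes>\<^sub>M \<nu>)"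
    by (intro pair_sigma_finite.intro mu.sigma_finite_measure_axioms PNsf)
  fix \<beta> :: "'x \<Rightarrow> real" assume bm[measurable]: "\<beta> \<in> borel_measurable (lebesgue_on D)" and bb: "\<forall>x\<in>D. \<bar>\<beta> x\<bar> \<le> 1"
  have bm'[measurable]: "\<beta> \<in> borel_measurable \<nu>" using bm unfolding \<nu>_def .
  define F where "F q = (\<beta> (snd (snd q)) * Z q)^2" for q
  have Fm[measurable]: "F \<in> borel_measurable (\<mu> \<Otimes>\<^sub>M (P \<Otimes>\<^sub>M \<nu>))"
    unfolding F_def using Zm' by measurable
  have b1: "(\<beta> x)^2 \<le> 1" if "x \<in> D" for x
  proof -
    have "\<bar>\<beta> x\<bar>^2 \<le> 1" using bb that by (intro power_le_one) auto
    then show ?thesis by simp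
  qed
  have Fi: "integrable (\<mu> \<Otimes>\<^sub>M (P \<Otimes>\<^sub>M \<nu>)) F"
  proof (rule Bochner_Integration.integrable_bound[OF Zi' Fm])
    show "AE q in \<mu> \<Otimes>\<^sub>M (P \<Otimes>\<^sub>M \<nu>). norm (F q) \<le> norm ((Z q)^2)"
    proof (rule AE_I2)
      fix q assume q: "q \<in> space (\<mu> \<Otimes>\<^sub>M (P \<Otimes>\<^sub>M \<nu>))"
      then have "snd (snd q) \<in> D" by (auto simp: space_pair_measure \<nu>_def)
      then have "(\<beta> (snd (snd q)))^2 * (Z q)^2 \<le> 1 * (Z q)^2" by (intro mult_right_mono b1) auto
      then show "norm (F q) \<le> norm ((Z q)^2)" by (simp add: F_def power_mult_distrib)
    qed
  qed
  have "(\<integral>t. Esq P D (\<lambda>\<omega> x. \<beta> x * z t \<omega> x) \<partial>lebesgue_on {0..T})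
      = (\<integral>t. (\<integral>y. F (t, y) \<partial>(P \<Otimes>\<^sub>M \<nu>)) \<partial>\<mu>)"
    by (simp add: Esq_def F_def Z_def \<mu>_def \<nu>_def)
  also have "\<dots> = integral\<^sup>L (\<mu> \<Otimes>\<^sub>M (P \<Otimes>\<^sub>M \<nu>)) F"
    by (rule pair_sigma_finite.integral_fst'[OF mPN Fi])
  also have "\<dots> = enn2real (\<integral>\<^sup>+q. ennreal (F q) \<partial>(\<mu> \<Otimes>\<^sub>M (P \<Otimes>\<^sub>M \<nu>)))"
    by (rule integral_eq_nn_integral) (auto simp: F_def)
  also have "(\<integral>\<^sup>+q. ennreal (F q) \<partial>(\<mu> \<Otimes>\<^sub>M (P \<Otimes>\<^sub>M \<nu>)))
      = (\<integral>\<^sup>+q. ennreal ((\<beta> (snd (snd q)))^2) * ennreal ((Z q)^2) \<partial>(\<mu> \<Otimes>\<^sub>M (P \<Otimes>\<^sub>M \<nu>)))"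
    by (intro nn_integral_cong) (simp add: F_def power_mult_distrib ennreal_mult)
  also have "\<dots> = (\<integral>\<^sup>+x. ennreal ((\<beta> x)^2) * Hn x \<partial>\<nu>)"
    by (rule chain) measurable
  also have "\<dots> = (\<integral>\<^sup>+x. ennreal ((\<beta> x)^2 * H x) \<partial>\<nu>)"
  proof (rule nn_integral_cong_AE)
    show "AE x in \<nu>. ennreal ((\<beta> x)^2) * Hn x = ennreal ((\<beta> x)^2 * H x)"
      using Heq by eventually_elim (use Hnn in \<open>auto simp: ennreal_mult\<close>)
  qed
  also have "enn2real \<dots> = (\<integral>x. (\<beta> x)^2 * H x \<partial>\<nu>)"
    by (rule integral_eq_nn_integral[symmetric]) (use Hm Hnn in auto)
  finally show "(\<integral>t. Esq P D (\<lambda>\<omega> x. \<beta> x * z t \<omega> x) \<partial>lebesgue_on {0..T}) = (\<integral>x. (\<beta> x)^2 * H x \<partial>lebesgue_on D)"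
    unfolding \<nu>_def .
qed


lemma levels:
  fixes D :: "'x::euclidean_space set" and H :: "'x \<Rightarrow> real" and \<alpha> :: real
  assumes Dm: "D \<in> sets lebesgue" "bounded D" and mD: "measure lebesgue D > 0"
    and al: "0 < \<alpha>" "\<alpha> \<le> 1"
    and Hm: "H \<in> borel_measurable (lebesgue_on D)" and Hnn: "\<forall>x. 0 \<le> H x"
  defines "c \<equiv> c_alpha D H \<alpha>"
  shows "0 \<le> c" "\<alpha> * measure lebesgue D \<le> measure lebesgue {x\<in>D. c \<le> H x}"
    "measure lebesgue {x\<in>D. c < H x} \<le> \<alpha> * measure lebesgue D"
proof -
  define N where "N = lebesgue_on D"
  interpret N: finite_measure N unfolding N_def
    by (rule finite_measure_lebesgue_on) (use Dm bounded_set_imp_lmeasurable in auto)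
  have spN: "space N = D" by (simp add: N_def)
  have HmN[measurable]: "H \<in> borel_measurable N" using Hm by (simp add: N_def)
  have msr: "measure lebesgue A = measure N A" if "A \<subseteq> D" for A
    unfolding N_def using Dm that by (subst measure_restrict_space) auto
  have setsN: "{x\<in>D. P x} \<in> sets N" if "Measurable.pred N P" for P
  proof -
    have "{x\<in>space N. P x} \<in> sets N" using that by measurable
    then show ?thesis by (simp add: spN)
  qed
  define L where "L a = {x\<in>D. a \<le> H x}" for a
  have Ls: "L a \<in> sets N" for a unfolding L_def by (rule setsN) measurable
  define S where "S = {a. 0 \<le> a \<and> \<alpha> * measure lebesgue D \<le> measure lebesgue (L a)}"
  have cdef: "c = Sup S" unfolding c_def c_alpha_def S_def L_def ..
  have L0: "L 0 = D" using Hnn by (auto simp: L_def)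
  have aD: "\<alpha> * measure lebesgue D \<le> measure lebesgue D" using al mD by simp
  have S0: "0 \<in> S" unfolding S_def using aD L0 by simp
  have Lmono: "a \<le> b \<Longrightarrow> L b \<subseteq> L a" for a b by (auto simp: L_def)
  have mmono: "a \<le> b \<Longrightarrow> measure lebesgue (L b) \<le> measure lebesgue (L a)" for a b
    using Lmono[of a b] by (simp add: msr L_def N.finite_measure_mono Ls[unfolded L_def])
  have apos: "0 < \<alpha> * measure lebesgue D" using al mD by simp
  have bdd: "bdd_above S"
  proof -
    have dec: "decseq (\<lambda>n::nat. L (real n))" unfolding decseq_def by (intro allI impI Lmono) simp
    have "(\<Inter>n. L (real n)) = {}"
    proof (safe)
      fix x assume "x \<in> (\<Inter>n. L (real n))"
      then have "real n \<le> H x" for n by (auto simp: L_def)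
      moreover obtain n where "H x < real n" using reals_Archimedean2 by blast
      ultimately show "x \<in> {}" by (meson not_le)
    qed
    then have "(\<lambda>n. measure N (L (real n))) \<longlonglongrightarrow> 0"
      using N.finite_Lim_measure_decseq[of "\<lambda>n. L (real n)"] dec Ls by auto
    from order_tendstoD(2)[OF this apos]
    obtain n where n: "measure N (L (real n)) < \<alpha> * measure lebesgue D"
      by (auto simp: eventually_sequentially)
    have "a \<le> real n" if "a \<in> S" for a
    proof (rule ccontr)
      assume "\<not> a \<le> real n"
      then have "measure lebesgue (L a) \<le> measure lebesgue (L (real n))" by (intro mmono) auto
      then show False using that n by (simp add: S_def msr L_def)
    qed
    then show ?thesis unfolding bdd_above_def by blast
  qed
  show c0: "0 \<le> c" unfolding cdef using S0 bdd by (rule cSup_upper)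
  have mL: "measure lebesgue (L a) = measure N (L a)" for a by (rule msr) (auto simp: L_def)
  define cn where "cn n = c - 1 / real (Suc n)" for n
  have cn_ge: "\<alpha> * measure lebesgue D \<le> measure N (L (cn n))" for n
  proof -
    have "cn n < Sup S" unfolding cn_def cdef[symmetric] by simp
    then obtain s where s: "s \<in> S" "cn n < s" using less_cSup_iff[of S] S0 bdd by blast
    then have "measure lebesgue (L s) \<le> measure lebesgue (L (cn n))" by (intro mmono) simp
    then show ?thesis using s by (simp add: S_def mL)
  qed
  have cn_dec: "decseq (\<lambda>n. L (cn n))"
    unfolding decseq_def cn_def by (intro allI impI Lmono) (simp add: frac_le)
  have cn_int: "(\<Inter>n. L (cn n)) = L c"
  proof (safe)
    fix x assume "x \<in> (\<Inter>n. L (cn n))"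
    then have x: "x \<in> D" "\<And>n. c - 1 / real (Suc n) \<le> H x" by (auto simp: L_def cn_def)
    show "x \<in> L c"
    proof (rule ccontr)
      assume "x \<notin> L c"
      then have "0 < c - H x" using x by (auto simp: L_def)
      then obtain n where "1 / real (Suc n) < c - H x" using nat_approx_posE by blast
      then show False using x(2)[of n] by simp
    qed
  next
    fix x n assume "x \<in> L c"
    then have x: "x \<in> D" "c \<le> H x" by (auto simp: L_def)
    have "c - 1 / real (Suc n) \<le> H x" by (rule order_trans[OF _ x(2)]) simp
    then show "x \<in> L (cn n)" using x unfolding L_def cn_def by blast
  qed
  have "(\<lambda>n. measure N (L (cn n))) \<longlonglongrightarrow> measure N (L c)"
    using N.finite_Lim_measure_decseq[of "\<lambda>n. L (cn n)"] cn_dec Ls cn_int by auto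
  then have "\<alpha> * measure lebesgue D \<le> measure N (L c)"
    by (rule LIMSEQ_le_const) (use cn_ge in blast)
  then show "\<alpha> * measure lebesgue D \<le> measure lebesgue {x\<in>D. c \<le> H x}"
    using mL[of c] by (simp add: L_def)
  define dn where "dn n = c + 1 / real (Suc n)" for n
  have dn_lt: "measure N (L (dn n)) < \<alpha> * measure lebesgue D" for n
  proof (rule ccontr)
    assume "\<not> ?thesis"
    then have "dn n \<in> S" using c0 by (auto simp: S_def mL dn_def)
    then have "dn n \<le> c" unfolding cdef using bdd by (rule cSup_upper)
    then show False by (simp add: dn_def)
  qed
  have dn_inc: "incseq (\<lambda>n. L (dn n))"
    unfolding incseq_def dn_def by (intro allI impI Lmono) (simp add: frac_le)
  have dn_un: "(\<Union>n. L (dn n)) = {x\<in>D. c < H x}"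
  proof (safe)
    fix x n assume "x \<in> L (dn n)"
    then have x: "x \<in> D" "c + 1 / real (Suc n) \<le> H x" by (auto simp: L_def dn_def)
    have "0 < 1 / real (Suc n)" by simp
    then show "x \<in> D" "c < H x" using x by linarith+
  next
    fix x assume x: "x \<in> D" "c < H x"
    then obtain n where "1 / real (Suc n) < H x - c" using nat_approx_posE[of "H x - c"] by auto
    then have "x \<in> L (dn n)" using x unfolding L_def dn_def by simp
    then show "x \<in> (\<Union>n. L (dn n))" by blast
  qed
  have "(\<lambda>n. measure N (L (dn n))) \<longlonglongrightarrow> measure N {x\<in>D. c < H x}"
    using N.finite_Lim_measure_incseq[of "\<lambda>n. L (dn n)"] dn_inc Ls dn_un by auto
  then have "measure N {x\<in>D. c < H x} \<le> \<alpha> * measure lebesgue D"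
    by (rule LIMSEQ_le_const2) (use dn_lt less_imp_le in blast)
  then show "measure lebesgue {x\<in>D. c < H x} \<le> \<alpha> * measure lebesgue D"
    using msr[of "{x\<in>D. c < H x}"] by simp
qed


lemma bathtub:
  fixes D :: "'x::euclidean_space set" and H :: "'x \<Rightarrow> real" and \<alpha> c :: real and \<beta> :: "'x \<Rightarrow> real"
  assumes Dm: "D \<in> sets lebesgue" "bounded D"
    and Hm: "H \<in> borel_measurable (lebesgue_on D)" and Hnn: "\<forall>x. 0 \<le> H x"
    and Hi: "integrable (lebesgue_on D) H"
    and c1: "\<alpha> * measure lebesgue D \<le> measure lebesgue {x\<in>D. c \<le> H x}"
    and c2: "measure lebesgue {x\<in>D. c < H x} \<le> \<alpha> * measure lebesgue D"
    and bs: "\<beta> \<in> Bset D \<alpha>"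
    and opt: "\<forall>\<beta>'\<in>Bset D \<alpha>. (\<integral>x. (\<beta>' x)^2 * H x \<partial>lebesgue_on D) \<le> (\<integral>x. (\<beta> x)^2 * H x \<partial>lebesgue_on D)"
  shows "(AE x in lebesgue. x \<in> D \<and> c < H x \<longrightarrow> (\<beta> x)^2 = 1)"
    "(AE x in lebesgue. x \<in> D \<and> H x < c \<longrightarrow> (\<beta> x)^2 = 0)"
proof -
  define N where "N = lebesgue_on D"
  interpret N: finite_measure N unfolding N_def
    by (rule finite_measure_lebesgue_on) (use Dm bounded_set_imp_lmeasurable in auto)
  have spN: "space N = D" by (simp add: N_def)
  have HmN[measurable]: "H \<in> borel_measurable N" using Hm by (simp add: N_def)
  have HiN: "integrable N H" using Hi by (simp add: N_def)
  have msr: "measure lebesgue A = measure N A" if "A \<subseteq> D" for A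
    unfolding N_def using Dm that by (subst measure_restrict_space) auto
  have setsN: "{x\<in>D. P x} \<in> sets N" if "Measurable.pred N P" for P
  proof -
    have "{x\<in>space N. P x} \<in> sets N" using that by measurable
    then show ?thesis by (simp add: spN)
  qed
  from bs have bm[measurable]: "\<beta> \<in> borel_measurable N" and b01: "\<And>x. x \<in> D \<Longrightarrow> 0 \<le> \<beta> x \<and> \<beta> x \<le> 1"
    and bint: "(\<integral>x. (\<beta> x)^2 \<partial>N) = \<alpha> * measure lebesgue D"
    by (auto simp: Bset_def N_def)
  define A where "A = {x\<in>D. c < H x}"
  define B where "B = {x\<in>D. H x = c}"
  have As[measurable]: "A \<in> sets N" unfolding A_def by (rule setsN) measurable
  have Bs[measurable]: "B \<in> sets N" unfolding B_def by (rule setsN) measurable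
  define a where "a = \<alpha> * measure lebesgue D"
  define mA where "mA = measure N A"
  define mB where "mB = measure N B"
  have AB: "A \<inter> B = {}" by (auto simp: A_def B_def)
  have "{x\<in>D. c \<le> H x} = A \<union> B" by (auto simp: A_def B_def)
  then have "measure lebesgue {x\<in>D. c \<le> H x} = mA + mB"
    using msr[of "A \<union> B"] N.finite_measure_Union[OF As Bs AB] by (simp add: A_def B_def mA_def mB_def)
  with c1 have aAB: "a \<le> mA + mB" by (simp add: a_def)
  have aA: "mA \<le> a" using c2 msr[of A] by (simp add: a_def mA_def A_def)
  have mB0: "0 \<le> mB" by (simp add: mB_def)
  define s where "s = (if mB = 0 then 0 else (a - mA) / mB)"
  have s01: "0 \<le> s" "s \<le> 1" using aAB aA mB0 by (auto simp: s_def divide_le_eq_1)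
  have sa: "mA + s * mB = a" using aAB aA mB0 by (auto simp: s_def)
  define \<theta>' where "\<theta>' x = indicator A x + s * indicator B x" for x :: 'x
  have th'01: "0 \<le> \<theta>' x \<and> \<theta>' x \<le> 1" for x
    using AB s01 by (cases "x \<in> A"; cases "x \<in> B") (auto simp: \<theta>'_def)
  have th'm[measurable]: "\<theta>' \<in> borel_measurable N" unfolding \<theta>'_def by measurable
  have th'i: "integrable N \<theta>'"
    by (rule N.integrable_const_bound[where B=1]) (use th'01 in auto)
  have th'int: "(\<integral>x. \<theta>' x \<partial>N) = a"
  proof -
    have sub: "A \<subseteq> space N" "B \<subseteq> space N" using spN by (auto simp: A_def B_def)
    have "(\<integral>x. \<theta>' x \<partial>N) = mA + s * mB" unfolding \<theta>'_def mA_def mB_def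
      using sub
      by (subst Bochner_Integration.integral_add)
         (auto simp: N.emeasure_finite less_top[symmetric] Int_absorb2 integral_mult_right_zero)
    then show ?thesis using sa by simp
  qed
  define \<beta>' where "\<beta>' x = sqrt (\<theta>' x)" for x
  have b'sq: "(\<beta>' x)^2 = \<theta>' x" for x using th'01[of x] by (simp add: \<beta>'_def)
  have b'm[measurable]: "\<beta>' \<in> borel_measurable N" unfolding \<beta>'_def by measurable
  have b'B: "\<beta>' \<in> Bset D \<alpha>"
    unfolding Bset_def using th'01 th'int b'sq b'm
    by (auto simp: N_def[symmetric] \<beta>'_def a_def real_sqrt_le_1_iff)
  define \<theta> where "\<theta> x = (\<beta> x)^2" for x
  have th01: "0 \<le> \<theta> x \<and> \<theta> x \<le> 1" if "x \<in> D" for x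
    using b01[OF that] by (auto simp: \<theta>_def power_le_one)
  have thM[measurable]: "\<theta> \<in> borel_measurable N" unfolding \<theta>_def by measurable
  have thi: "integrable N \<theta>"
    by (rule N.integrable_const_bound[where B=1]) (use th01 in \<open>auto simp: spN\<close>)
  have thint: "(\<integral>x. \<theta> x \<partial>N) = a" using bint by (simp add: \<theta>_def a_def)
  have thHi: "integrable N (\<lambda>x. \<theta> x * H x)"
    by (rule Bochner_Integration.integrable_bound[OF HiN])
       (use th01 Hnn in \<open>auto simp: spN intro!: AE_I2 mult_left_le_one_le\<close>)
  have th'Hi: "integrable N (\<lambda>x. \<theta>' x * H x)"
    by (rule Bochner_Integration.integrable_bound[OF HiN])
       (use th'01 Hnn in \<open>auto simp: spN intro!: AE_I2 mult_left_le_one_le\<close>)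
  have optb: "(\<integral>x. \<theta>' x * H x \<partial>N) \<le> (\<integral>x. \<theta> x * H x \<partial>N)"
    using opt b'B b'sq by (auto simp: N_def[symmetric] \<theta>_def)
  define g where "g x = (\<theta>' x * H x - \<theta> x * H x) - (c * \<theta>' x - c * \<theta> x)" for x
  have gi: "integrable N g" unfolding g_def
    by (intro Bochner_Integration.integrable_diff Bochner_Integration.integrable_mult_right thHi th'Hi thi th'i)
  have gint: "integral\<^sup>L N g = (\<integral>x. \<theta>' x * H x \<partial>N) - (\<integral>x. \<theta> x * H x \<partial>N)"
    unfolding g_def
    by (simp add: Bochner_Integration.integral_diff Bochner_Integration.integrable_diff Bochner_Integration.integrable_mult_right thHi th'Hi thi th'i thint th'int)
  have gnn: "0 \<le> g x" if x: "x \<in> D" for x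
  proof -
    have ge: "g x = (\<theta>' x - \<theta> x) * (H x - c)" by (simp add: g_def algebra_simps)
    consider "x \<in> A" | "x \<in> B" | "H x < c" using x by (auto simp: A_def B_def) (meson linorder_neqE_linordered_idom)
    then show ?thesis
    proof cases
      case 1
      then have "\<theta>' x = 1" using AB by (auto simp: \<theta>'_def indicator_def)
      then show ?thesis using 1 th01[OF x] unfolding ge by (auto simp: A_def)
    next
      case 2
      then show ?thesis unfolding ge by (auto simp: B_def)
    next
      case 3
      then have "x \<notin> A" "x \<notin> B" by (auto simp: A_def B_def)
      then have "\<theta>' x = 0" by (simp add: \<theta>'_def)
      then show ?thesis using 3 th01[OF x] unfolding ge by (auto intro!: mult_nonneg_nonpos)
    qed
  qed
  have "integral\<^sup>L N g \<ge> 0" by (rule integral_nonneg_AE) (use gnn in \<open>auto simp: spN intro!: AE_I2\<close>)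
  then have "integral\<^sup>L N g = 0" using gint optb by simp
  then have AEg: "AE x in N. g x = 0"
  proof -
    have "AE x in N. 0 \<le> g x" using gnn by (auto simp: spN intro!: AE_I2)
    then show ?thesis using integral_nonneg_eq_0_iff_AE[OF gi] \<open>integral\<^sup>L N g = 0\<close> by simp
  qed
  have DN: "D \<inter> space lebesgue \<in> sets lebesgue" using Dm by simp
  have "AE x in N. c < H x \<longrightarrow> (\<beta> x)^2 = 1"
    using AEg
  proof (rule AE_mp[OF _ AE_I2], intro impI)
    fix x assume x: "x \<in> space N" and g0: "g x = 0" and cH: "c < H x"
    then have xA: "x \<in> A" by (auto simp: spN A_def)
    then have "\<theta>' x = 1" using AB by (auto simp: \<theta>'_def indicator_def)
    moreover have "g x = (\<theta>' x - \<theta> x) * (H x - c)" by (simp add: g_def algebra_simps)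
    ultimately show "(\<beta> x)^2 = 1" using g0 cH by (simp add: \<theta>_def)
  qed
  then show "AE x in lebesgue. x \<in> D \<and> c < H x \<longrightarrow> (\<beta> x)^2 = 1"
    unfolding N_def AE_restrict_space_iff[OF DN] by eventually_elim auto
  have "AE x in N. H x < c \<longrightarrow> (\<beta> x)^2 = 0"
    using AEg
  proof (rule AE_mp[OF _ AE_I2], intro impI)
    fix x assume x: "x \<in> space N" and g0: "g x = 0" and cH: "H x < c"
    then have "x \<notin> A" "x \<notin> B" by (auto simp: A_def B_def)
    then have "\<theta>' x = 0" by (simp add: \<theta>'_def)
    moreover have "g x = (\<theta>' x - \<theta> x) * (H x - c)" by (simp add: g_def algebra_simps)
    ultimately show "(\<beta> x)^2 = 0" using g0 cH by (simp add: \<theta>_def)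
  qed
  then show "AE x in lebesgue. x \<in> D \<and> H x < c \<longrightarrow> (\<beta> x)^2 = 0"
    unfolding N_def AE_restrict_space_iff[OF DN] by eventually_elim auto
qed
theorem mainTheorem7:
  fixes P F0 FT :: "'w measure" and D :: "'x::euclidean_space set" and T M \<epsilon> \<alpha> :: real
    and zsol :: "('w \<Rightarrow> 'x \<Rightarrow> real) \<Rightarrow> real \<Rightarrow> 'w \<Rightarrow> 'x \<Rightarrow> real"
    and y0 \<eta>s :: "'w \<Rightarrow> 'x \<Rightarrow> real" and \<beta>s :: "'x \<Rightarrow> real"
  assumes P: "prob_space P"
    and F0: "subalgebra P F0" and FT: "subalgebra P FT" and F0T: "sets F0 \<subseteq> sets FT"
    and D: "open D" "bounded D" "connected D" "D \<noteq> {}"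
    and T: "T > 0" and M: "M > 0"
    and eps: "\<epsilon> > 0" and alpha: "0 < \<alpha>" "\<alpha> < 1"
    and y0: "y0 \<in> L2_space F0 P D"
    and sol: "sol_regular FT P D T zsol"
    and bs: "\<beta>s \<in> Bset D \<alpha>" and es: "\<eta>s \<in> UM FT P D M"
    and nash_sup: "\<forall>\<beta>\<in>Bset D \<alpha>. Jeps P D T zsol \<epsilon> y0 \<eta>s \<beta> \<le> Jeps P D T zsol \<epsilon> y0 \<eta>s \<beta>s"
    and nash_inf: "\<forall>\<eta>\<in>UM FT P D M. Jeps P D T zsol \<epsilon> y0 \<eta>s \<beta>s \<le> Jeps P D T zsol \<epsilon> y0 \<eta> \<beta>s"
  shows "let H = Hfun P T zsol \<eta>s; c = c_alpha D H \<alpha> in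
           \<alpha> * measure lebesgue D \<le> measure lebesgue {x\<in>D. c \<le> H x}
         \<and> measure lebesgue {x\<in>D. c < H x} \<le> \<alpha> * measure lebesgue D
         \<and> (AE x in lebesgue. x \<in> D \<and> c < H x \<longrightarrow> (\<beta>s x)^2 = 1)
         \<and> (AE x in lebesgue. x \<in> D \<and> H x < c \<longrightarrow> (\<beta>s x)^2 = 0)"
  proof -
  have Dm: "D \<in> sets lebesgue" using lmeasurable_open[OF D(2) D(1)] by (simp add: fmeasurable_def)
  have mD: "measure lebesgue D > 0"
  proof -
    obtain x where x: "x \<in> D" using D(4) by blast
    obtain e where e: "e > 0" "ball x e \<subseteq> D" using D(1) x open_contains_ball by blast
    have "0 < measure lebesgue (ball x e)" using content_ball_pos[OF e(1)] by simp
    also have "\<dots> \<le> measure lebesgue D"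
      by (rule measure_mono_fmeasurable[OF e(2)]) (use lmeasurable_open[OF D(2) D(1)] in auto)
    finally show ?thesis .
  qed
  have esL: "\<eta>s \<in> L2_space FT P D" using es by (simp add: UM_def)
  from sol esL have Zm: "(\<lambda>q. zsol \<eta>s (fst q) (fst (snd q)) (snd (snd q)))
          \<in> borel_measurable (lebesgue_on {0..T} \<Otimes>\<^sub>M (P \<Otimes>\<^sub>M lebesgue_on D))"
    and Zi: "integrable (lebesgue_on {0..T} \<Otimes>\<^sub>M (P \<Otimes>\<^sub>M lebesgue_on D))
          (\<lambda>q. (zsol \<eta>s (fst q) (fst (snd q)) (snd (snd q)))^2)"
    unfolding sol_regular_def by auto
  define H where "H = Hfun P T zsol \<eta>s"
  have HH: "H = (\<lambda>x. (\<integral>t. (\<integral>\<omega>. (zsol \<eta>s t \<omega> x)^2 \<partial>P) \<partial>lebesgue_on {0..T}))"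
    by (simp add: H_def fun_eq_iff Hfun_def)
  note HP = Hprops[OF P Dm D(2) Zm Zi, folded HH]
  have opt: "\<forall>\<beta>'\<in>Bset D \<alpha>. (\<integral>x. (\<beta>' x)^2 * H x \<partial>lebesgue_on D) \<le> (\<integral>x. (\<beta>s x)^2 * H x \<partial>lebesgue_on D)"
  proof
    fix \<beta>' assume b': "\<beta>' \<in> Bset D \<alpha>"
    have I: "(\<integral>t. Esq P D (\<lambda>\<omega> x. \<beta> x * zsol \<eta>s t \<omega> x) \<partial>lebesgue_on {0..T}) = (\<integral>x. (\<beta> x)^2 * H x \<partial>lebesgue_on D)"
      if "\<beta> \<in> Bset D \<alpha>" for \<beta>
    proof -
      have m: "\<beta> \<in> borel_measurable (lebesgue_on D)" and b: "\<forall>x\<in>D. \<bar>\<beta> x\<bar> \<le> 1"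
        using that by (auto simp: Bset_def)
      show ?thesis using HP(4)[OF m b] by (simp add: HH)
    qed
    show "(\<integral>x. (\<beta>' x)^2 * H x \<partial>lebesgue_on D) \<le> (\<integral>x. (\<beta>s x)^2 * H x \<partial>lebesgue_on D)"
      using nash_sup b' I[OF b'] I[OF bs] by (auto simp: Jeps_def)
  qed
  have al1: "\<alpha> \<le> 1" using alpha by simp
  have H1: "H \<in> borel_measurable (lebesgue_on D)" using HP(1) by (simp add: HH)
  have H2: "\<forall>x. 0 \<le> H x" using HP(2) by (simp add: HH)
  have H3: "integrable (lebesgue_on D) H" using HP(3) by (simp add: HH)
  note LV = levels[OF Dm D(2) mD alpha(1) al1 H1 H2]
  note BT = bathtub[OF Dm D(2) H1 H2 H3 LV(2) LV(3) bs opt]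
  show ?thesis unfolding Let_def H_def[symmetric] using LV BT by blast
qed

end
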